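(* Let $q$ be a prime power not divisible by $2$ or $3$, let $t\in\mathbb{F}_q$ with $t\ne0,1$, let $f(x)=x^3+3x^2-4t$ and let $N_f(t)$ be the number of zeros of $f$ in $\mathbb{F}_q$. Then $N_f(t)=1+H_q(t)$, where $H_q$ is the hypergeometric sum with parameters $\boldsymbol\alpha=(1/3,2/3)$, $\boldsymbol\beta=(1,1/2)$.
   Context: Fix a nontrivial additive character $\psi_q$ of $\mathbb{F}_q$, a generator $\omega$ of the character group of $\mathbb{F}_q^\times$, and $g(m)=\sum_{x\in\mathbb{F}_q^\times}\omega(x)^m\psi_q(x)$. Here, with $(p_1)=(3)$ and $(q_1,q_2)=(1,2)$ (so that $\frac{(X-e^{2\pi i/3})(X-e^{4\pi i/3})}{(X-1)(X+1)}=\frac{X^3-1}{(X-1)(X^2-1)}$), $H_q$ is defined by $$H_q(t)=\frac{(-1)^{3}}{1-q}\sum_{m=0}^{q-2}q^{s(m)-1}g(3m)g(-m)g(-2m)\,\omega(-\tfrac{4}{27}t)^m,$$ where $s(m)=1$ if $m\equiv0\pmod{q-1}$ and $s(m)=0$ otherwise. *)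

theory Defs
  imports Complex_Main
begin

text \<open>Finite field F_q is modelled by a type 'a of class {finite, field}; q = CARD('a).\<close>

definition nontriv_add_char :: "('a::{finite,field} \<Rightarrow> complex) \<Rightarrow> bool" where
  "nontriv_add_char psi \<longleftrightarrow>
     (\<forall>x y. psi (x + y) = psi x * psi y) \<and> (\<forall>x. psi x \<noteq> 0) \<and> (\<exists>x. psi x \<noteq> 1)"

text \<open>Generator of the character group of F_q^*: a homomorphism F_q^* to the nonzero complex
  numbers whose order in the character group is exactly q - 1 (its value at 0 is irrelevant).\<close>
definition mult_char_generator :: "('a::{finite,field} \<Rightarrow> complex) \<Rightarrow> bool" where
  "mult_char_generator omega \<longleftrightarrow>
     (\<forall>x y. x \<noteq> 0 \<longrightarrow> y \<noteq> 0 \<longrightarrow> omega (x * y) = omega x * omega y) \<and>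
     (\<forall>x. x \<noteq> 0 \<longrightarrow> omega x \<noteq> 0) \<and>
     (\<forall>k::nat. 0 < k \<and> k < card (UNIV::'a set) - 1 \<longrightarrow> (\<exists>x. x \<noteq> 0 \<and> omega x ^ k \<noteq> 1))"

definition gauss_sum :: "('a::{finite,field} \<Rightarrow> complex) \<Rightarrow> ('a \<Rightarrow> complex) \<Rightarrow> int \<Rightarrow> complex" where
  "gauss_sum psi omega m = (\<Sum>x\<in>{x::'a. x \<noteq> 0}. omega x powi m * psi x)"

definition s_fun :: "nat \<Rightarrow> nat \<Rightarrow> int" where
  "s_fun q m = (if (q - 1) dvd m then 1 else 0)"

text \<open>The hypergeometric sum H_q(t) for alpha = (1/3,2/3), beta = (1,1/2).\<close>
definition H_q :: "('a::{finite,field} \<Rightarrow> complex) \<Rightarrow> ('a \<Rightarrow> complex) \<Rightarrow> 'a \<Rightarrow> complex" where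
  "H_q psi omega t =
     (let q = card (UNIV::'a set); g = gauss_sum psi omega in
      ((-1) ^ 3 / (1 - of_nat q)) *
      (\<Sum>m\<in>{0..q - 2}. (of_nat q) powi (s_fun q m - 1) *
          g (3 * int m) * g (- int m) * g (- 2 * int m) *
          omega (- (4 / 27) * t) ^ m))"

end

theory Submission imports Defs "HOL-Number_Theory.Residues" begin

lemma pow_card_closed:
  fixes S :: "'b::field set"
  assumes "finite S" "0 \<notin> S" "\<And>x y. x \<in> S \<Longrightarrow> y \<in> S \<Longrightarrow> x * y \<in> S" "z \<in> S"
  shows "z ^ card S = 1"
proof -
  have inj: "inj_on (\<lambda>y. z * y) S" using assms by (auto simp: inj_on_def)
  have sub: "(\<lambda>y. z * y) ` S \<subseteq> S" using assms by auto
  have eq: "(\<lambda>y. z * y) ` S = S"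
    using card_subset_eq[OF assms(1) sub] card_image[OF inj] by simp
  have "prod (\<lambda>y. y) S = prod (\<lambda>y. y) ((\<lambda>y. z * y) ` S)" using eq by simp
  also have "\<dots> = prod (\<lambda>y. z * y) S" using prod.reindex[OF inj] by simp
  also have "\<dots> = z ^ card S * prod (\<lambda>y. y) S" by (simp add: prod.distrib)
  finally have "1 * prod (\<lambda>y. y) S = z ^ card S * prod (\<lambda>y. y) S" by simp
  moreover have "prod (\<lambda>y. y) S \<noteq> 0" using assms by simp
  ultimately show ?thesis by (metis mult_right_cancel)
qed

lemma char_not_dvd:
  fixes p :: nat
  assumes "prime p" "\<not> p dvd card (UNIV::'a::{finite,field} set)"
  shows "(of_nat p :: 'a) \<noteq> 0"
proof
  assume "(of_nat p :: 'a) = 0"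
  hence "CHAR('a) dvd p" by (simp add: of_nat_eq_0_iff_char_dvd)
  moreover have "CHAR('a) \<noteq> 1" by simp
  ultimately have "CHAR('a) = p" using assms(1) by (metis prime_nat_iff)
  with CHAR_dvd_CARD[where 'a='a] assms(2) show False by simp
qed

lemma omega_facts:
  fixes omega :: "'a::{finite,field} \<Rightarrow> complex"
  assumes om: "mult_char_generator omega"
  defines "U \<equiv> {x::'a. x \<noteq> 0}"
  shows "omega 1 = 1"
    and "\<And>x y. x \<noteq> 0 \<Longrightarrow> y \<noteq> 0 \<Longrightarrow> omega (x / y) = omega x / omega y"
    and "\<And>x n. x \<noteq> 0 \<Longrightarrow> omega (x ^ n) = omega x ^ n"
    and "\<And>w. w \<noteq> 0 \<Longrightarrow> (\<Sum>m<card U. omega w ^ m) = (if w = 1 then of_nat (card U) else 0)"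
proof -
  have mul: "\<And>x y. x \<noteq> 0 \<Longrightarrow> y \<noteq> 0 \<Longrightarrow> omega (x * y) = omega x * omega y"
   and nz: "\<And>x. x \<noteq> 0 \<Longrightarrow> omega x \<noteq> 0"
   and gen: "\<And>k. 0 < k \<Longrightarrow> k < card (UNIV::'a set) - 1 \<Longrightarrow> \<exists>x. x \<noteq> 0 \<and> omega x ^ k \<noteq> 1"
    using om unfolding mult_char_generator_def by blast+
  show o1: "omega 1 = 1" using mul[of 1 1] nz[of 1] by simp
  show "\<And>x y. x \<noteq> 0 \<Longrightarrow> y \<noteq> 0 \<Longrightarrow> omega (x / y) = omega x / omega y"
  proof -
    fix x y :: 'a assume "x \<noteq> 0" "y \<noteq> 0"
    hence "omega (x / y) * omega y = omega x" using mul[of "x/y" y] by simp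
    thus "omega (x / y) = omega x / omega y" using nz[OF \<open>y \<noteq> 0\<close>] by (simp add: field_simps)
  qed
  show pw: "\<And>x n. x \<noteq> 0 \<Longrightarrow> omega (x ^ n) = omega x ^ n"
  proof -
    fix x :: 'a and n assume "x \<noteq> 0"
    thus "omega (x ^ n) = omega x ^ n" by (induction n) (auto simp: o1 mul)
  qed
  have cardU: "card U = card (UNIV::'a set) - 1"
  proof -
    have "U = UNIV - {0}" unfolding U_def by auto
    thus ?thesis by (simp add: card_Diff_subset)
  qed
  have finU: "finite U" by simp
  have Upow: "\<And>x::'a. x \<noteq> 0 \<Longrightarrow> x ^ card U = 1"
  proof -
    fix x :: 'a assume "x \<noteq> 0"
    have "finite U" "0 \<notin> U" "\<And>a b. a \<in> U \<Longrightarrow> b \<in> U \<Longrightarrow> a * b \<in> U" "x \<in> U"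
      using \<open>x \<noteq> 0\<close> by (auto simp: U_def)
    from pow_card_closed[OF this] show "x ^ card U = 1" .
  qed
  have inj: "\<And>w. w \<noteq> 0 \<Longrightarrow> omega w = 1 \<Longrightarrow> w = 1"
  proof (rule ccontr)
    fix w :: 'a assume w: "w \<noteq> 0" "omega w = 1" "w \<noteq> 1"
    have "\<not> inj_on omega U"
      using w o1 unfolding inj_on_def U_def by (metis one_neq_zero mem_Collect_eq)
    hence lt: "card (omega ` U) < card U"
      using card_image_le[OF finU, of omega] inj_on_iff_eq_card[OF finU, of omega] by linarith
    have pos: "0 < card (omega ` U)"
    proof -
      have "1 \<in> U" unfolding U_def by simp
      thus ?thesis using finU by (auto simp: card_gt_0_iff)
    qed
    have all: "\<And>x. x \<noteq> 0 \<Longrightarrow> omega x ^ card (omega ` U) = 1"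
    proof (rule pow_card_closed)
      fix x :: 'a assume "x \<noteq> 0"
      show "finite (omega ` U)" by simp
      show "0 \<notin> omega ` U" using nz unfolding U_def by auto
      show "\<And>a b. a \<in> omega ` U \<Longrightarrow> b \<in> omega ` U \<Longrightarrow> a * b \<in> omega ` U"
      proof -
        fix a b assume "a \<in> omega ` U" "b \<in> omega ` U"
        then obtain x y where "x \<in> U" "y \<in> U" "a = omega x" "b = omega y" by auto
        thus "a * b \<in> omega ` U" using mul[of x y] unfolding U_def
          by (metis (mono_tags, lifting) image_eqI mem_Collect_eq no_zero_divisors)
      qed
      show "omega x \<in> omega ` U" using \<open>x \<noteq> 0\<close> unfolding U_def by auto
    qed
    from gen[OF pos] lt cardU all show False by auto
  qed
  show "\<And>w. w \<noteq> 0 \<Longrightarrow> (\<Sum>m<card U. omega w ^ m) = (if w = 1 then of_nat (card U) else 0)"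
  proof -
    fix w :: 'a assume w: "w \<noteq> 0"
    show "(\<Sum>m<card U. omega w ^ m) = (if w = 1 then of_nat (card U) else 0)"
    proof (cases "w = 1")
      case True thus ?thesis by (simp add: o1)
    next
      case False
      hence ne: "omega w \<noteq> 1" using inj w by blast
      have "omega w ^ card U = 1" using pw[OF w, of "card U"] Upow[OF w] o1 by simp
      thus ?thesis using ne False by (simp add: sum_gp_strict)
    qed
  qed
qed

lemma psi_facts:
  fixes psi :: "'a::{finite,field} \<Rightarrow> complex"
  assumes ps: "nontriv_add_char psi"
  defines "U \<equiv> {x::'a. x \<noteq> 0}"
  shows "psi 0 = 1" and "(\<Sum>x\<in>U. psi x) = -1"
    and "\<And>c. (\<Sum>z\<in>U. psi (z * c)) = (if c = 0 then of_nat (card U) else -1)"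
proof -
  have add: "\<And>x y. psi (x + y) = psi x * psi y" and nz: "\<And>x. psi x \<noteq> 0"
    and ex: "\<exists>x. psi x \<noteq> 1" using ps unfolding nontriv_add_char_def by blast+
  show p0: "psi 0 = 1" using add[of 0 0] nz[of 0] by simp
  obtain c where c: "psi c \<noteq> 1" using ex by blast
  have "(\<Sum>x\<in>UNIV. psi x) = (\<Sum>x\<in>UNIV. psi (x + c))"
    by (rule sum.reindex_bij_witness[where j="\<lambda>x. x - c" and i="\<lambda>x. x + c"]) auto
  also have "\<dots> = psi c * (\<Sum>x\<in>UNIV. psi x)" by (simp add: add sum_distrib_left mult.commute)
  finally have s0: "(\<Sum>x\<in>UNIV. psi x) = 0" using c
    by (metis mult_cancel_right2 mult.commute)
  have "UNIV = insert 0 U" unfolding U_def by auto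
  hence "(\<Sum>x\<in>UNIV. psi x) = (\<Sum>x\<in>insert 0 U. psi x)" by simp
  also have "\<dots> = psi 0 + (\<Sum>x\<in>U. psi x)" by (subst sum.insert) (auto simp: U_def)
  finally have "(\<Sum>x\<in>UNIV. psi x) = psi 0 + (\<Sum>x\<in>U. psi x)" .
  thus sU: "(\<Sum>x\<in>U. psi x) = -1" using s0 p0 by (simp add: add_eq_0_iff)
  show "\<And>c. (\<Sum>z\<in>U. psi (z * c)) = (if c = 0 then of_nat (card U) else -1)"
  proof -
    fix c :: 'a
    show "(\<Sum>z\<in>U. psi (z * c)) = (if c = 0 then of_nat (card U) else -1)"
    proof (cases "c = 0")
      case True thus ?thesis by (simp add: p0)
    next
      case False
      have "(\<Sum>z\<in>U. psi (z * c)) = (\<Sum>x\<in>U. psi x)"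
        by (rule sum.reindex_bij_witness[where i="\<lambda>x. x / c" and j="\<lambda>x. x * c"])
           (use False in \<open>auto simp: U_def\<close>)
      thus ?thesis using sU False by simp
    qed
  qed
qed

lemma gauss_pos: "gauss_sum psi omega (int k) = (\<Sum>x\<in>{x. x \<noteq> 0}. omega x ^ k * psi x)"
  by (simp add: gauss_sum_def)

lemma gauss_neg: "gauss_sum psi omega (- int k) = (\<Sum>x\<in>{x. x \<noteq> 0}. inverse (omega x) ^ k * psi x)"
  by (simp add: gauss_sum_def power_int_minus power_inverse)

theorem mainTheorem3:
  fixes psi omega :: "'a::{finite,field} \<Rightarrow> complex" and t :: 'a
  assumes "\<not> 2 dvd card (UNIV::'a set)" and "\<not> 3 dvd card (UNIV::'a set)"
    and "nontriv_add_char psi" and "mult_char_generator omega"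
    and "t \<noteq> 0" and "t \<noteq> 1"
  shows "complex_of_nat (card {x::'a. x ^ 3 + 3 * x ^ 2 - 4 * t = 0}) = 1 + H_q psi omega t"
proof -
  define q where "q = card (UNIV::'a set)"
  define U where "U = {x::'a. x \<noteq> 0}"
  define Q where "Q = card U"
  define a where "a = - (4 / 27) * t"
  define p where "p = (\<lambda>u::'a. a * u ^ 3 + u + 1)"
  define R where "R = card {u\<in>U. p u = 0}"
  define g where "g = gauss_sum psi omega"
  note om = omega_facts[OF assms(4), folded U_def]
  note ps = psi_facts[OF assms(3), folded U_def]
  have mul: "\<And>x y. x \<noteq> 0 \<Longrightarrow> y \<noteq> 0 \<Longrightarrow> omega (x * y) = omega x * omega y"
    using assms(4) unfolding mult_char_generator_def by blast
  have two: "(2::'a) \<noteq> 0" using char_not_dvd[of 2, OF _ assms(1)] by simp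
  have three: "(3::'a) \<noteq> 0" using char_not_dvd[of 3, OF _ assms(2)] by simp
  have four: "(4::'a) \<noteq> 0"
  proof -
    have "(4::'a) = 2 * 2" by simp
    thus ?thesis using two by (metis no_zero_divisors)
  qed
  have a0: "a \<noteq> 0"
  proof -
    have "(4::'a) = 2 * 2" by simp
    hence "(4::'a) \<noteq> 0" using two by (metis no_zero_divisors)
    moreover have "(27::'a) = 3 * 3 * 3" by simp
    hence "(27::'a) \<noteq> 0" using three by (metis no_zero_divisors)
    ultimately show ?thesis using assms(5) by (simp add: a_def)
  qed
  have QU: "Q = q - 1"
  proof -
    have "U = UNIV - {0}" unfolding U_def by auto
    thus ?thesis by (simp add: card_Diff_subset Q_def q_def)
  qed
  have q2: "q \<ge> 2"
  proof -
    have "{0::'a, 1} \<subseteq> UNIV" by simp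
    hence "card {0::'a, 1} \<le> q" unfolding q_def by (rule card_mono[OF finite_UNIV])
    thus ?thesis by simp
  qed
  have finU: "finite U" by simp
  define X where "X = (\<lambda>m::nat. g (3 * int m) * g (- int m) * g (- 2 * int m) * omega a ^ m)"
  have X_eq: "X m = (\<Sum>x\<in>U. \<Sum>z\<in>U. \<Sum>y\<in>U. omega (a * x ^ 3 / (y * z ^ 2)) ^ m * psi (x + y + z))"
    for m
  proof -
    have e1: "3 * int m = int (3 * m)" "- 2 * int m = - int (2 * m)" by simp_all
    have "X m = (\<Sum>x\<in>U. omega x ^ (3*m) * psi x) * (\<Sum>y\<in>U. inverse (omega y) ^ m * psi y)
       * (\<Sum>z\<in>U. inverse (omega z) ^ (2*m) * psi z) * omega a ^ m"
      unfolding X_def g_def e1 gauss_pos gauss_neg U_def by simp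
    also have "\<dots> = (\<Sum>x\<in>U. \<Sum>y\<in>U. \<Sum>z\<in>U. (omega x ^ (3*m) * psi x) * (inverse (omega y) ^ m * psi y)
       * (inverse (omega z) ^ (2*m) * psi z) * omega a ^ m)"
      by (simp add: sum_distrib_left sum_distrib_right mult_ac)
    also have "\<dots> = (\<Sum>x\<in>U. \<Sum>z\<in>U. \<Sum>y\<in>U. (omega x ^ (3*m) * psi x) * (inverse (omega y) ^ m * psi y)
       * (inverse (omega z) ^ (2*m) * psi z) * omega a ^ m)"
      by (rule sum.cong[OF refl]) (rule sum.swap)
    also have "\<dots> = (\<Sum>x\<in>U. \<Sum>z\<in>U. \<Sum>y\<in>U. omega (a * x ^ 3 / (y * z ^ 2)) ^ m * psi (x + y + z))"
    proof (intro sum.cong refl)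
      fix x z y assume xyz: "x \<in> U" "z \<in> U" "y \<in> U"
      hence nz: "x \<noteq> 0" "y \<noteq> 0" "z \<noteq> 0" by (auto simp: U_def)
      have padd: "psi (x + y + z) = psi x * psi y * psi z"
        using assms(3) unfolding nontriv_add_char_def by simp
      have "omega (a * x ^ 3 / (y * z ^ 2)) = omega a * omega x ^ 3 / (omega y * omega z ^ 2)"
        using nz a0 by (simp add: om(2) om(3) mul)
      thus "(omega x ^ (3*m) * psi x) * (inverse (omega y) ^ m * psi y)
       * (inverse (omega z) ^ (2*m) * psi z) * omega a ^ m = omega (a * x ^ 3 / (y * z ^ 2)) ^ m * psi (x + y + z)"
        by (simp add: padd power_mult_distrib power_divide power_mult[symmetric] divide_inverse power_inverse mult_ac)
    qed
    finally show ?thesis .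
  qed
  have sumX: "(\<Sum>m<Q. X m) = of_nat Q * (\<Sum>x\<in>U. \<Sum>z\<in>U. psi (x + a * x ^ 3 / z ^ 2 + z))"
  proof -
    have "(\<Sum>m<Q. X m) = (\<Sum>m<Q. \<Sum>x\<in>U. \<Sum>z\<in>U. \<Sum>y\<in>U. omega (a * x ^ 3 / (y * z ^ 2)) ^ m * psi (x + y + z))"
      by (simp add: X_eq)
    also have "\<dots> = (\<Sum>x\<in>U. \<Sum>z\<in>U. \<Sum>y\<in>U. \<Sum>m<Q. omega (a * x ^ 3 / (y * z ^ 2)) ^ m * psi (x + y + z))"
      by (simp only: sum.swap[where A = "{..<Q}"])
    also have "\<dots> = (\<Sum>x\<in>U. \<Sum>z\<in>U. of_nat Q * psi (x + a * x ^ 3 / z ^ 2 + z))"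
    proof (intro sum.cong refl)
      fix x z assume xz: "x \<in> U" "z \<in> U"
      hence nz: "x \<noteq> 0" "z \<noteq> 0" by (auto simp: U_def)
      define c where "c = a * x ^ 3 / z ^ 2"
      have cU: "c \<in> U" using nz a0 by (simp add: c_def U_def)
      have "(\<Sum>y\<in>U. \<Sum>m<Q. omega (a * x ^ 3 / (y * z ^ 2)) ^ m * psi (x + y + z))
          = (\<Sum>y\<in>U. if y = c then of_nat Q * psi (x + c + z) else 0)"
      proof (rule sum.cong[OF refl])
        fix y assume "y \<in> U"
        hence ny: "y \<noteq> 0" by (simp add: U_def)
        have r0: "a * x ^ 3 / (y * z ^ 2) \<noteq> 0" using nz ny a0 by simp
        have iff: "(a * x ^ 3 / (y * z ^ 2) = 1) = (y = c)"
          using nz ny unfolding c_def by (auto simp: field_simps)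
        have "(\<Sum>m<Q. omega (a * x ^ 3 / (y * z ^ 2)) ^ m * psi (x + y + z))
            = (\<Sum>m<Q. omega (a * x ^ 3 / (y * z ^ 2)) ^ m) * psi (x + y + z)"
          by (simp add: sum_distrib_right)
        also have "\<dots> = (if y = c then of_nat Q * psi (x + c + z) else 0)"
          using om(4)[OF r0] iff by (auto simp: Q_def)
        finally show "(\<Sum>m<Q. omega (a * x ^ 3 / (y * z ^ 2)) ^ m * psi (x + y + z))
            = (if y = c then of_nat Q * psi (x + c + z) else 0)" .
      qed
      also have "\<dots> = of_nat Q * psi (x + c + z)" using cU by simp
      finally show "(\<Sum>y\<in>U. \<Sum>m<Q. omega (a * x ^ 3 / (y * z ^ 2)) ^ m * psi (x + y + z))
          = of_nat Q * psi (x + a * x ^ 3 / z ^ 2 + z)" by (simp add: c_def)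
    qed
    finally show ?thesis by (simp add: sum_distrib_left)
  qed
  have sumP: "(\<Sum>x\<in>U. \<Sum>z\<in>U. psi (x + a * x ^ 3 / z ^ 2 + z)) = of_nat q * of_nat R - of_nat Q"
  proof -
    have "(\<Sum>x\<in>U. \<Sum>z\<in>U. psi (x + a * x ^ 3 / z ^ 2 + z)) = (\<Sum>z\<in>U. \<Sum>x\<in>U. psi (x + a * x ^ 3 / z ^ 2 + z))"
      by (rule sum.swap)
    also have "\<dots> = (\<Sum>z\<in>U. \<Sum>u\<in>U. psi (z * p u))"
    proof (rule sum.cong[OF refl])
      fix z assume "z \<in> U"
      hence nz: "z \<noteq> 0" by (simp add: U_def)
      have eq: "psi (z * p (x / z)) = psi (x + a * x ^ 3 / z ^ 2 + z)" for x
      proof -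
        have "z * p (x / z) = x + a * x ^ 3 / z ^ 2 + z"
          using nz by (simp add: p_def field_simps power2_eq_square power3_eq_cube)
        thus ?thesis by simp
      qed
      show "(\<Sum>x\<in>U. psi (x + a * x ^ 3 / z ^ 2 + z)) = (\<Sum>u\<in>U. psi (z * p u))"
        by (rule sum.reindex_bij_witness[where i="\<lambda>u. u * z" and j="\<lambda>x. x / z"])
           (use nz eq in \<open>auto simp: U_def\<close>)
    qed
    also have "\<dots> = (\<Sum>u\<in>U. \<Sum>z\<in>U. psi (z * p u))" by (rule sum.swap)
    also have "\<dots> = (\<Sum>u\<in>U. (if p u = 0 then of_nat q else 0) - 1)"
    proof (rule sum.cong[OF refl])
      fix u
      show "(\<Sum>z\<in>U. psi (z * p u)) = (if p u = 0 then of_nat q else 0) - 1"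
        using ps(3)[of "p u"] QU q2 by (auto simp: Q_def of_nat_diff)
    qed
    also have "\<dots> = of_nat q * of_nat R - of_nat Q"
      by (simp add: sum_subtractf sum.inter_filter[symmetric] R_def Q_def finU)
    finally show ?thesis .
  qed
  have g0: "g 0 = -1" using ps(2) by (simp add: g_def gauss_sum_def U_def)
  have X0: "X 0 = -1" by (simp add: X_def g0)
  have Qpos: "0 < Q" using QU q2 by simp
  have qC: "(of_nat q :: complex) \<noteq> 0" using q2 by simp
  have QC: "(of_nat Q :: complex) = of_nat q - 1" using QU q2 by (simp add: of_nat_diff)
  have wsum: "(\<Sum>m\<in>{0..q - 2}. (of_nat q :: complex) powi (s_fun q m - 1) * X m)
      = (\<Sum>m<Q. X m) / of_nat q + (1 - 1 / of_nat q) * X 0"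
  proof -
    have set: "{0..q - 2} = {..<Q}" using QU q2 by auto
    have "(\<Sum>m\<in>{0..q - 2}. (of_nat q :: complex) powi (s_fun q m - 1) * X m)
        = (\<Sum>m<Q. X m / of_nat q + (if m = 0 then (1 - 1 / of_nat q) * X 0 else 0))"
    proof (unfold set, rule sum.cong[OF refl])
      fix m assume "m \<in> {..<Q}"
      hence mQ: "m < q - 1" using QU by simp
      show "(of_nat q :: complex) powi (s_fun q m - 1) * X m = X m / of_nat q + (if m = 0 then (1 - 1 / of_nat q) * X 0 else 0)"
      proof (cases "m = 0")
        case True thus ?thesis using qC by (simp add: s_fun_def field_simps)
      next
        case False
        hence "\<not> (q - 1) dvd m" using mQ by (auto dest: dvd_imp_le)
        thus ?thesis using False by (simp add: s_fun_def power_int_minus divide_inverse mult.commute)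
      qed
    qed
    also have "\<dots> = (\<Sum>m<Q. X m) / of_nat q + (1 - 1 / of_nat q) * X 0"
      using Qpos by (simp add: sum.distrib sum_divide_distrib)
    finally show ?thesis .
  qed
  have H: "H_q psi omega t = of_nat R - 1"
  proof -
    have "H_q psi omega t = ((-1) ^ 3 / (1 - of_nat q)) *
      (\<Sum>m\<in>{0..q - 2}. (of_nat q :: complex) powi (s_fun q m - 1) * X m)"
      unfolding H_q_def Let_def q_def[symmetric] g_def[symmetric] X_def a_def
      by (simp add: mult.assoc)
    also have "\<dots> = of_nat R - 1"
      unfolding wsum sumX sumP X0 QC using qC q2
      by (simp add: field_simps)
    finally show ?thesis .
  qed
  have roots: "card {x::'a. x ^ 3 + 3 * x ^ 2 - 4 * t = 0} = R"
  proof -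
    define A where "A = {x::'a. x ^ 3 + 3 * x ^ 2 - 4 * t = 0}"
    have t27: "(27::'a) \<noteq> 0"
    proof -
      have "(27::'a) = 3 * 3 * 3" by simp
      thus ?thesis using three by (metis no_zero_divisors)
    qed
    have key: "p (3 / x) * x ^ 3 = x ^ 3 + 3 * x ^ 2 - 4 * t" if "x \<noteq> 0" for x
      using that t27 by (simp add: p_def a_def field_simps power2_eq_square power3_eq_cube)
    have A0: "x \<noteq> 0" if "x \<in> A" for x using that assms(5) four by (auto simp: A_def)
    have piff: "p (3 / x) = 0 \<longleftrightarrow> x \<in> A" if "x \<noteq> 0" for x
      using key[OF that] that by (auto simp: A_def)
    have inj: "inj_on (\<lambda>x. 3 / x) A"
      using A0 three by (auto simp: inj_on_def field_simps)
    have img: "(\<lambda>x. 3 / x) ` A = {u\<in>U. p u = 0}"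
    proof (intro equalityI subsetI)
      fix u assume "u \<in> (\<lambda>x. 3 / x) ` A"
      then obtain x where "x \<in> A" "u = 3 / x" by auto
      thus "u \<in> {u\<in>U. p u = 0}" using A0 piff three by (auto simp: U_def)
    next
      fix u assume u: "u \<in> {u\<in>U. p u = 0}"
      hence un: "u \<noteq> 0" by (simp add: U_def)
      have x: "3 / (3 / u) = u" using three by simp
      have "3 / u \<noteq> 0" using un three by simp
      hence "3 / u \<in> A" using piff[of "3/u"] x u by simp
      thus "u \<in> (\<lambda>x. 3 / x) ` A" using x by (metis image_eqI)
    qed
    have "card A = R" using card_image[OF inj] img by (simp add: R_def)
    thus ?thesis by (simp add: A_def)
  qed
  show ?thesis using roots H by simp
qed

end
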